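(* Let $(G_k)_{k\in\mathbb Z}$ be a gibonacci sequence and let $F_k$ denote the Fibonacci numbers. For every positive integer $n$ and all integers $m$, $s$ and $t$, \begin{equation*} 5\sum_{j = 1}^n (-F_{m - 5})^{n - j} F_m^{j - 1} G_{5(j + t) + m + s} = F_m^n G_{5(n + t + 1) + s} - (-1)^n F_{m - 5}^n G_{5(t + 1) + s}. \end{equation*}
   Context: A gibonacci sequence $(G_k)_{k\in\mathbb Z}$ is defined by arbitrary initial values $G_0=a$, $G_1=b$ (numbers, not both zero) and $G_k=G_{k-1}+G_{k-2}$ for all integers $k$. The Fibonacci numbers $F_k$ are the gibonacci sequence with $F_0=0$, $F_1=1$, extended to all integer indices by the same recurrence. The convention $0^0=1$ is used for powers. *)

theory Defs
  imports Complex_Main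
begin

definition gibonacci :: "(int \<Rightarrow> complex) \<Rightarrow> bool" where
  "gibonacci G \<longleftrightarrow> \<not> (G 0 = 0 \<and> G 1 = 0) \<and> (\<forall>k. G k = G (k - 1) + G (k - 2))"

text \<open>Fibonacci numbers extended to all integer indices by the same recurrence.\<close>
fun fib_nat_aux :: "nat \<Rightarrow> int" where
  "fib_nat_aux 0 = 0"
| "fib_nat_aux (Suc 0) = 1"
| "fib_nat_aux (Suc (Suc n)) = fib_nat_aux (Suc n) + fib_nat_aux n"

definition fibz :: "int \<Rightarrow> int" where
  "fibz k = (if k \<ge> 0 then fib_nat_aux (nat k) else (-1) ^ (nat (-k) + 1) * fib_nat_aux (nat (-k)))"

end

theory Submission
  imports Defs
begin

lemma fib_nat_aux_rec: "fib_nat_aux (n+2) = fib_nat_aux (n+1) + fib_nat_aux n"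
  by simp

lemma fibz_rec: "fibz (k+2) = fibz (k+1) + fibz k"
proof (cases "k \<ge> 0")
  case True
  then obtain n where n: "k = int n" by (metis nonneg_eq_int)
  have "nat (int n + 2) = Suc (Suc n)" "nat (int n + 1) = Suc n" by auto
  then show ?thesis using n by (simp add: fibz_def)
next
  case False
  show ?thesis
  proof (cases "k = -1")
    case True then show ?thesis by (simp add: fibz_def)
  next
    case F2: False
    define p where "p = nat (- k - 2)"
    have p: "k = - int p - 2" using False F2 unfolding p_def by simp
    show ?thesis
    proof (cases p)
      case 0 then show ?thesis using p by (simp add: fibz_def numeral_eq_Suc)
    next
      case (Suc q)
      have a: "nat (- k) = Suc (Suc (Suc q))" using p Suc by simp
      have b: "nat (- (k+1)) = Suc (Suc q)" using p Suc by simp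
      have c: "nat (- (k+2)) = Suc q" using p Suc by simp
      have d: "k + 2 < 0" "k+1 < 0" "k < 0" using p Suc by auto
      show ?thesis using a b c d unfolding fibz_def
        by (simp add: algebra_simps)
    qed
  qed
qed

lemma rec_zero:
  fixes f :: "int \<Rightarrow> complex"
  assumes r: "\<And>k. f (k+2) = f (k+1) + f k" and z: "f 0 = 0" "f 1 = 0"
  shows "f k = 0"
proof -
  have A: "f (int n) = 0 \<and> f (int n + 1) = 0" for n
  proof (induction n)
    case 0 then show ?case using z by simp
  next
    case (Suc n)
    then show ?case using r[of "int n"] by (simp add: ac_simps)
  qed
  have B: "f (- int n) = 0 \<and> f (1 - int n) = 0" for n
  proof (induction n)
    case 0 then show ?case using z by simp
  next
    case (Suc n)
    have "f (- int n + 1) = f (- int n) + f (- int n - 1)" using r[of "- int n - 1"] by simp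
    then have h: "f (- int n - 1) = 0" using Suc by simp
    have e1: "- int (Suc n) = - int n - 1" and e2: "1 - int (Suc n) = - int n" by simp_all
    show ?case unfolding e1 e2 using h Suc by blast
  qed
  show ?thesis
  proof (cases "k \<ge> 0")
    case True then show ?thesis using A[of "nat k"] by simp
  next
    case False then show ?thesis using B[of "nat (-k)"] by simp
  qed
qed

lemma key:
  fixes G :: "int \<Rightarrow> complex"
  assumes g: "gibonacci G"
  shows "5 * G (k + m) = of_int (fibz m) * G (k + 5) + of_int (fibz (m - 5)) * G k"
proof -
  have r: "G (x+2) = G (x+1) + G x" for x
    using g unfolding gibonacci_def by (metis add_diff_cancel_right' diff_add_eq diff_diff_eq one_add_one)
  define H where "H m = 5 * G (k + m) - of_int (fibz m) * G (k + 5) - of_int (fibz (m - 5)) * G k" for m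
  have fr: "of_int (fibz (x+2)) = (of_int (fibz (x+1)) + of_int (fibz x) :: complex)" for x
    using fibz_rec[of x] by simp
  have fr2: "of_int (fibz (x-3)) = (of_int (fibz (x-4)) + of_int (fibz (x - 5)) :: complex)" for x
    using fr[of "x-5"] by (simp add: algebra_simps)
  have "H (x+2) = H (x+1) + H x" for x
    unfolding H_def using r[of "k+x"] fr[of x] fr2[of "x"]
    by (simp add: algebra_simps)
  moreover have "H 0 = 0"
    unfolding H_def by (simp add: fibz_def numeral_eq_Suc)
  moreover have "H 1 = 0"
  proof -
    have e: "G (k+5) = 5 * G (k+1) + 3 * G k"
      using r[of k] r[of "k+1"] r[of "k+2"] r[of "k+3"] by (simp add: algebra_simps)
    show ?thesis unfolding H_def using e by (simp add: fibz_def numeral_eq_Suc)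
  qed
  ultimately have "H m = 0" by (rule rec_zero)
  then show ?thesis unfolding H_def by (simp add: algebra_simps)
qed

lemma telescope:
  fixes a b :: complex and Y :: "nat \<Rightarrow> complex"
  shows "(\<Sum>j = 1..n. b ^ (n - j) * a ^ (j - 1) * (a * Y j - b * Y (j - 1)))
         = a ^ n * Y n - b ^ n * Y 0"
proof (induction n)
  case 0 then show ?case by simp
next
  case (Suc n)
  have "(\<Sum>j = 1..Suc n. b ^ (Suc n - j) * a ^ (j - 1) * (a * Y j - b * Y (j - 1)))
     = (\<Sum>j = 1..n. b * (b ^ (n - j) * a ^ (j - 1) * (a * Y j - b * Y (j - 1))))
       + a ^ n * (a * Y (Suc n) - b * Y n)"
    by (simp add: Suc_diff_le mult.assoc)
  also have "\<dots> = b * (a ^ n * Y n - b ^ n * Y 0) + a ^ n * (a * Y (Suc n) - b * Y n)"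
    by (simp only: sum_distrib_left[symmetric] Suc.IH)
  also have "\<dots> = a ^ Suc n * Y (Suc n) - b ^ Suc n * Y 0"
    by (simp add: algebra_simps)
  finally show ?case .
qed

theorem proposition3:
  fixes G :: "int \<Rightarrow> complex" and n :: nat and m s t :: int
  assumes "gibonacci G" and "n \<ge> 1"
  shows "5 * (\<Sum>j = 1..n. (- of_int (fibz (m - 5))) ^ (n - j) * of_int (fibz m) ^ (j - 1)
              * G (5 * (int j + t) + m + s))
         = of_int (fibz m) ^ n * G (5 * (int n + t + 1) + s)
           - (-1) ^ n * of_int (fibz (m - 5)) ^ n * G (5 * (t + 1) + s)"
proof -
  define a :: complex where "a = of_int (fibz m)"
  define b :: complex where "b = - of_int (fibz (m - 5))"
  define Y where "Y j = G (5 * (int j + t + 1) + s)" for j :: nat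
  have X: "5 * G (5 * (int j + t) + m + s) = a * Y j - b * Y (j - 1)" if "j \<ge> 1" for j
  proof -
    have "5 * G (5 * (int j + t) + m + s) = 5 * G ((5 * (int j + t) + s) + m)"
      by (simp add: algebra_simps)
    also have "\<dots> = a * G (5 * (int j + t) + s + 5) + of_int (fibz (m - 5)) * G (5 * (int j + t) + s)"
      using key[OF assms(1)] a_def by simp
    also have "\<dots> = a * Y j - b * Y (j - 1)"
      using that unfolding Y_def b_def by (simp add: algebra_simps of_nat_diff)
    finally show ?thesis .
  qed
  have "5 * (\<Sum>j = 1..n. b ^ (n - j) * a ^ (j - 1) * G (5 * (int j + t) + m + s))
      = (\<Sum>j = 1..n. b ^ (n - j) * a ^ (j - 1) * (a * Y j - b * Y (j - 1)))"
    unfolding sum_distrib_left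
  proof (rule sum.cong)
    fix j assume "j \<in> {1..n}"
    then have "j \<ge> 1" by simp
    have "5 * (b ^ (n - j) * a ^ (j - 1) * G (5 * (int j + t) + m + s))
        = b ^ (n - j) * a ^ (j - 1) * (5 * G (5 * (int j + t) + m + s))" by simp
    then show "5 * (b ^ (n - j) * a ^ (j - 1) * G (5 * (int j + t) + m + s))
        = b ^ (n - j) * a ^ (j - 1) * (a * Y j - b * Y (j - 1))" using X[OF \<open>j \<ge> 1\<close>] by simp
  qed simp
  also have "\<dots> = a ^ n * Y n - b ^ n * Y 0" by (rule telescope)
  finally show ?thesis unfolding a_def b_def Y_def
    by (simp add: power_minus' algebra_simps)
qed

end
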